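(* Let $\alpha>0$ and let $X$ be an $\alpha$-normal smooth reflexive pre-ordered Banach space with a closed cone such that $X_+-X_+$ is dense in $X$. Then its dual $X'$, endowed with the dual cone, is a $\upsilon$-quasi-lattice. If, in addition, $X$ is approximately $1$-conormal, then $X'$ is a $\mu$-quasi-lattice, and its $\upsilon$- and $\mu$-quasi-suprema coincide.
   Context: A pre-ordered Banach space is a real Banach space $X$ with a cone $X_+$ ($X_++X_+\subseteq X_+$, $\lambda X_+\subseteq X_+$ for $\lambda\ge0$); $x\le y$ means $y-x\in X_+$. The dual cone is $X'_+=\{f\in X': f(X_+)\subseteq[0,\infty)\}$. $X$ is $\alpha$-normal if $0\le x\le y$ implies $\|x\|\le\alpha\|y\|$; approximately $1$-conormal if for every $x$ and $\varepsilon>0$ there is $a$ with $0\le a$, $x\le a$ and $\|a\|<\|x\|+\varepsilon$. $X$ is smooth if each norm-one $x$ has a unique norm-one $\phi\in X'$ with $\phi(x)=1$. For subsets $A$, $\upsilon(A)$ is the set of upper bounds and $\mu(A)$ the set of minimal upper bounds ($z\in\upsilon(A)$ with $A\le w\le z\Rightarrow w=z$). With $\sigma_{x,y}(z)=\|z-x\|+\|z-y\|$, a pre-ordered Banach space with closed cone is a $\upsilon$-quasi-lattice (resp. $\mu$-quasi-lattice) if for all $x,y$ the set $\upsilon(\{x,y\})$ (resp. $\mu(\{x,y\})$) is non-empty and contains a unique minimizer of $\sigma_{x,y}$ on it, the corresponding quasi-supremum. *)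

theory Defs
  imports "HOL-Analysis.Analysis"
begin

definition is_cone :: "'a::real_vector set \<Rightarrow> bool" where
  "is_cone K \<longleftrightarrow> (\<forall>x\<in>K. \<forall>y\<in>K. x + y \<in> K) \<and> (\<forall>x\<in>K. \<forall>c::real. c \<ge> 0 \<longrightarrow> c *\<^sub>R x \<in> K)"

definition cle :: "'a::real_vector set \<Rightarrow> 'a \<Rightarrow> 'a \<Rightarrow> bool" where
  "cle K x y \<longleftrightarrow> y - x \<in> K"

definition dual_cone :: "'a::real_normed_vector set \<Rightarrow> ('a \<Rightarrow>\<^sub>L real) set" where
  "dual_cone K = {f. \<forall>x\<in>K. 0 \<le> blinfun_apply f x}"

definition alpha_normal :: "real \<Rightarrow> 'a::real_normed_vector set \<Rightarrow> bool" where
  "alpha_normal \<alpha> K \<longleftrightarrow> (\<forall>x y. cle K 0 x \<and> cle K x y \<longrightarrow> norm x \<le> \<alpha> * norm y)"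

definition approx_1_conormal :: "'a::real_normed_vector set \<Rightarrow> bool" where
  "approx_1_conormal K \<longleftrightarrow>
     (\<forall>x. \<forall>\<epsilon>>0. \<exists>a. cle K 0 a \<and> cle K x a \<and> norm a < norm x + \<epsilon>)"

definition smooth_space :: "'a::real_normed_vector itself \<Rightarrow> bool" where
  "smooth_space _ \<longleftrightarrow>
     (\<forall>x::'a. norm x = 1 \<longrightarrow> (\<exists>!\<phi>::'a \<Rightarrow>\<^sub>L real. norm \<phi> = 1 \<and> blinfun_apply \<phi> x = 1))"

definition reflexive_space :: "'a::real_normed_vector itself \<Rightarrow> bool" where
  "reflexive_space _ \<longleftrightarrow>
     (\<forall>\<Phi>::('a \<Rightarrow>\<^sub>L real) \<Rightarrow>\<^sub>L real. \<exists>x::'a. \<forall>f. blinfun_apply \<Phi> f = blinfun_apply f x)"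

definition upper_bounds :: "'a::real_vector set \<Rightarrow> 'a set \<Rightarrow> 'a set" where
  "upper_bounds K A = {z. \<forall>a\<in>A. cle K a z}"

definition min_upper_bounds :: "'a::real_vector set \<Rightarrow> 'a set \<Rightarrow> 'a set" where
  "min_upper_bounds K A =
     {z \<in> upper_bounds K A. \<forall>w. (\<forall>a\<in>A. cle K a w) \<and> cle K w z \<longrightarrow> w = z}"

definition sigma :: "'a::real_normed_vector \<Rightarrow> 'a \<Rightarrow> 'a \<Rightarrow> real" where
  "sigma x y z = norm (z - x) + norm (z - y)"

definition quasi_lattice_wrt :: "'a::real_normed_vector set \<Rightarrow> ('a \<Rightarrow> 'a \<Rightarrow> 'a set) \<Rightarrow> bool" where
  "quasi_lattice_wrt K S \<longleftrightarrow> closed K \<and>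
     (\<forall>x y. S x y \<noteq> {} \<and> (\<exists>!z. z \<in> S x y \<and> (\<forall>w\<in>S x y. sigma x y z \<le> sigma x y w)))"

definition quasi_sup_wrt :: "('a::real_normed_vector \<Rightarrow> 'a \<Rightarrow> 'a set) \<Rightarrow> 'a \<Rightarrow> 'a \<Rightarrow> 'a" where
  "quasi_sup_wrt S x y = (THE z. z \<in> S x y \<and> (\<forall>w\<in>S x y. sigma x y z \<le> sigma x y w))"

definition upsilon_quasi_lattice :: "'a::real_normed_vector set \<Rightarrow> bool" where
  "upsilon_quasi_lattice K \<longleftrightarrow> quasi_lattice_wrt K (\<lambda>x y. upper_bounds K {x, y})"

definition mu_quasi_lattice :: "'a::real_normed_vector set \<Rightarrow> bool" where
  "mu_quasi_lattice K \<longleftrightarrow> quasi_lattice_wrt K (\<lambda>x y. min_upper_bounds K {x, y})"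

definition upsilon_quasi_sup :: "'a::real_normed_vector set \<Rightarrow> 'a \<Rightarrow> 'a \<Rightarrow> 'a" where
  "upsilon_quasi_sup K = quasi_sup_wrt (\<lambda>x y. upper_bounds K {x, y})"

definition mu_quasi_sup :: "'a::real_normed_vector set \<Rightarrow> 'a \<Rightarrow> 'a \<Rightarrow> 'a" where
  "mu_quasi_sup K = quasi_sup_wrt (\<lambda>x y. min_upper_bounds K {x, y})"

end

theory Submission
  imports Defs
begin

definition sublinear :: "('a::real_vector \<Rightarrow> real) \<Rightarrow> bool" where
  "sublinear p \<longleftrightarrow> (\<forall>x y. p (x+y) \<le> p x + p y) \<and> (\<forall>x c. c > 0 \<longrightarrow> p (c *\<^sub>R x) = c * p x)"

lemma sublinear_0: "sublinear p \<Longrightarrow> p 0 = 0"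
  unfolding sublinear_def by (metis (no_types) mult_cancel_right1 one_add_one scaleR_zero_right zero_less_two zero_neq_numeral add_cancel_right_right mult_2)

lemma sublinear_neg: "sublinear p \<Longrightarrow> 0 \<le> p x + p (-x)"
  using sublinear_0[of p] unfolding sublinear_def by (metis add.right_inverse)

lemma sublinear_Inf:
  fixes G :: "'a::real_vector \<Rightarrow> 'b::real_vector \<Rightarrow> real"
  assumes T: "T \<noteq> {}" "\<And>s t. s\<in>T \<Longrightarrow> t\<in>T \<Longrightarrow> s+t\<in>T" "\<And>c t. c>0 \<Longrightarrow> t\<in>T \<Longrightarrow> c *\<^sub>R t \<in> T"
    and sub: "\<And>x y s t. s\<in>T \<Longrightarrow> t\<in>T \<Longrightarrow> G (x+y) (s+t) \<le> G x s + G y t"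
    and hom: "\<And>c x t. c>0 \<Longrightarrow> t\<in>T \<Longrightarrow> G (c *\<^sub>R x) (c *\<^sub>R t) = c * G x t"
    and bdd: "\<And>x. bdd_below (G x ` T)"
  shows "sublinear (\<lambda>x. Inf (G x ` T))"
proof -
  define Q where "Q x = Inf (G x ` T)" for x
  have low: "Q x \<le> G x t" if "t \<in> T" for x t
    unfolding Q_def using that bdd by (simp add: cInf_lower)
  have great: "c \<le> Q x" if "\<And>t. t \<in> T \<Longrightarrow> c \<le> G x t" for c x
    unfolding Q_def using that T(1) by (auto intro: cInf_greatest)
  have add: "Q (x+y) \<le> Q x + Q y" for x y
  proof -
    have "Q (x+y) - Q y \<le> G x s" if s: "s \<in> T" for s
    proof -
      have "Q (x+y) - G x s \<le> G y t" if "t \<in> T" for t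
        using low[of "s+t" "x+y"] sub[of s t x y] s that T(2) by auto
      then have "Q (x+y) - G x s \<le> Q y" by (rule great)
      then show ?thesis by simp
    qed
    then have "Q (x+y) - Q y \<le> Q x" by (rule great)
    then show ?thesis by simp
  qed
  have le: "Q (c *\<^sub>R x) \<le> c * Q x" if "c > 0" for c x
  proof -
    have "Q (c *\<^sub>R x) / c \<le> G x t" if "t \<in> T" for t
      using low[of "c *\<^sub>R t" "c *\<^sub>R x"] hom[of c t x] T(3)[of c t] that \<open>c>0\<close>
      by (simp add: divide_le_eq mult.commute)
    then have "Q (c *\<^sub>R x) / c \<le> Q x" by (rule great)
    then show ?thesis using \<open>c>0\<close> by (simp add: divide_le_eq mult.commute)
  qed
  have "Q (c *\<^sub>R x) = c * Q x" if "c > 0" for c x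
  proof -
    have "Q x \<le> (1/c) * Q (c *\<^sub>R x)"
      using le[of "1/c" "c *\<^sub>R x"] that by simp
    then have "c * Q x \<le> Q (c *\<^sub>R x)" using that by (simp add: field_simps)
    then show ?thesis using le[OF that, of x] by simp
  qed
  then show ?thesis using add unfolding sublinear_def Q_def by blast
qed

lemma hahn_banach_min:
  fixes P :: "'a::real_vector \<Rightarrow> real"
  assumes P: "sublinear P"
  shows "\<exists>L. linear L \<and> (\<forall>x. L x \<le> P x)"
proof -
  define A where "A = {q::'a\<Rightarrow>real. sublinear q \<and> (\<forall>x. q x \<le> P x)}"
  define R where "R q1 q2 \<longleftrightarrow> (\<forall>x::'a. q2 x \<le> q1 x)" for q1 q2 :: "'a \<Rightarrow> real"
  have po: "partial_order_on A (relation_of R A)"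
    unfolding partial_order_on_def preorder_on_def refl_on_def trans_def antisym_def relation_of_def R_def
    by (auto intro: order_trans antisym ext simp: fun_eq_iff)
  have ch: "\<exists>u \<in> A. \<forall>a \<in> C. R a u" if C: "C \<in> Chains (relation_of R A)" for C
  proof (cases "C = {}")
    case True then show ?thesis using P unfolding A_def by auto
  next
    case False
    have CA: "C \<subseteq> A" using C False unfolding Chains_def relation_of_def by blast
    have tot: "R a b \<or> R b a" if "a \<in> C" "b \<in> C" for a b
      using C that unfolding Chains_def relation_of_def by blast
    define m where "m x = Inf ((\<lambda>q. q x) ` C)" for x
    have bdd: "bdd_below ((\<lambda>q. q x) ` C)" for x
    proof
      fix y assume "y \<in> (\<lambda>q. q x) ` C"
      then obtain q where q: "q \<in> C" "y = q x" by auto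
      then have "sublinear q" "q (-x) \<le> P (-x)" using CA unfolding A_def by auto
      then show "- P (-x) \<le> y" using sublinear_neg[of q x] q by linarith
    qed
    have low: "m x \<le> q x" if "q \<in> C" for q x
      unfolding m_def using that bdd by (simp add: cInf_lower)
    have great: "c \<le> m x" if "\<And>q. q \<in> C \<Longrightarrow> c \<le> q x" for c x
      unfolding m_def using that False by (auto intro: cInf_greatest)
    have add: "m (x+y) \<le> m x + m y" for x y
    proof -
      have "m (x+y) - m y \<le> q1 x" if q1: "q1 \<in> C" for q1
      proof -
        have "m (x+y) - q1 x \<le> q2 y" if q2: "q2 \<in> C" for q2
        proof (cases "R q2 q1")
          case True
          have "m (x+y) \<le> q1 (x+y)" using low q1 by blast
          also have "\<dots> \<le> q1 x + q1 y" using q1 CA unfolding A_def sublinear_def by auto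
          also have "\<dots> \<le> q1 x + q2 y" using True unfolding R_def by auto
          finally show ?thesis by simp
        next
          case False
          then have "R q1 q2" using tot q1 q2 by blast
          have "m (x+y) \<le> q2 (x+y)" using low q2 by blast
          also have "\<dots> \<le> q2 x + q2 y" using q2 CA unfolding A_def sublinear_def by auto
          also have "\<dots> \<le> q1 x + q2 y" using \<open>R q1 q2\<close> unfolding R_def by auto
          finally show ?thesis by simp
        qed
        then have "m (x+y) - q1 x \<le> m y" by (rule great)
        then show ?thesis by simp
      qed
      then have "m (x+y) - m y \<le> m x" by (rule great)
      then show ?thesis by simp
    qed
    have le: "m (c *\<^sub>R x) \<le> c * m x" if "c > 0" for c x
    proof -
      have "m (c *\<^sub>R x) / c \<le> q x" if "q \<in> C" for q
        using low[OF that, of "c *\<^sub>R x"] that CA \<open>c>0\<close> unfolding A_def sublinear_def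
        by (auto simp: divide_le_eq mult.commute)
      then have "m (c *\<^sub>R x) / c \<le> m x" by (rule great)
      then show ?thesis using \<open>c>0\<close> by (simp add: divide_le_eq mult.commute)
    qed
    have hom: "m (c *\<^sub>R x) = c * m x" if "c > 0" for c x
    proof -
      have "m x \<le> (1/c) * m (c *\<^sub>R x)"
        using le[of "1/c" "c *\<^sub>R x"] that by simp
      then have "c * m x \<le> m (c *\<^sub>R x)" using that by (simp add: field_simps)
      then show ?thesis using le[OF that, of x] by simp
    qed
    obtain q0 where q0: "q0 \<in> C" using False by blast
    have "m \<in> A"
    proof -
      have "q0 x \<le> P x" for x using q0 CA unfolding A_def by auto
      then have "m x \<le> P x" for x using order_trans[OF low[OF q0, of x]] by blast
      then show ?thesis unfolding A_def sublinear_def using add hom by blast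
    qed
    moreover have "\<forall>a \<in> C. R a m" using low unfolding R_def by auto
    ultimately show ?thesis by blast
  qed
  obtain q where qA: "q \<in> A" and qmin: "\<And>a. a \<in> A \<Longrightarrow> R q a \<Longrightarrow> a = q"
    using predicate_Zorn[OF po ch] by blast
  have qs: "sublinear q" and qP: "\<And>x. q x \<le> P x" using qA unfolding A_def by auto
  have qneg: "q (-y) = - q y" for y
  proof -
    define G where "G x t = q (x + t *\<^sub>R y) - t * q y" for x and t :: real
    define r where "r x = Inf (G x ` {0..})" for x
    have bddG: "bdd_below (G x ` {0..})" for x
    proof
      fix z assume "z \<in> G x ` {0..}"
      then obtain t where t: "t \<ge> 0" "z = G x t" by auto
      have "q ((x + t *\<^sub>R y) + (-x)) \<le> q (x + t *\<^sub>R y) + q (-x)"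
        using qs unfolding sublinear_def by blast
      then have "q (t *\<^sub>R y) \<le> q (x + t *\<^sub>R y) + q (-x)" by simp
      moreover have "q (t *\<^sub>R y) = t * q y"
      proof (cases "t = 0")
        case True then show ?thesis using sublinear_0[OF qs] by simp
      next
        case False then show ?thesis using t qs unfolding sublinear_def by auto
      qed
      ultimately show "- q (-x) \<le> z" using t unfolding G_def by linarith
    qed
    have rs: "sublinear r" unfolding r_def
    proof (rule sublinear_Inf)
      show "G (x + x') (s + t) \<le> G x s + G x' t" for x x' s t
      proof -
        have "q ((x + s *\<^sub>R y) + (x' + t *\<^sub>R y)) \<le> q (x + s *\<^sub>R y) + q (x' + t *\<^sub>R y)"
          using qs unfolding sublinear_def by blast
        moreover have "(x + s *\<^sub>R y) + (x' + t *\<^sub>R y) = x + x' + (s+t) *\<^sub>R y"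
          by (simp add: algebra_simps)
        ultimately have "q (x + x' + (s+t) *\<^sub>R y) \<le> q (x + s *\<^sub>R y) + q (x' + t *\<^sub>R y)" by simp
        then show ?thesis unfolding G_def by (simp add: algebra_simps)
      qed
      show "G (c *\<^sub>R x) (c *\<^sub>R t) = c * G x t" if "c > 0" for c x t
      proof -
        have "q (c *\<^sub>R (x + t *\<^sub>R y)) = c * q (x + t *\<^sub>R y)"
          using qs that unfolding sublinear_def by blast
        then have "q (c *\<^sub>R x + (c * t) *\<^sub>R y) = c * q (x + t *\<^sub>R y)"
          by (simp add: algebra_simps)
        then show ?thesis unfolding G_def by (simp add: algebra_simps)
      qed
    qed (use bddG in auto)
    have rq: "r x \<le> q x" for x
    proof -
      have "r x \<le> G x 0" unfolding r_def using bddG by (auto intro: cInf_lower)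
      then show ?thesis unfolding G_def by simp
    qed
    have "r \<in> A" using rs rq qP unfolding A_def by (auto intro: order_trans)
    moreover have "R q r" using rq unfolding R_def by auto
    ultimately have "r = q" using qmin by blast
    then have "q (-y) \<le> G (-y) 1" unfolding r_def using bddG[of "-y"] by (auto intro!: cInf_lower)
    then have "q (-y) \<le> - q y" unfolding G_def using sublinear_0[OF qs] by simp
    then show ?thesis using sublinear_neg[OF qs, of y] by linarith
  qed
  have qadd: "q (x + y) = q x + q y" for x y
  proof -
    have "q ((-x) + (-y)) \<le> q (-x) + q (-y)" using qs unfolding sublinear_def by blast
    then have "q (-(x+y)) \<le> q (-x) + q (-y)" by simp
    then have "q (x+y) \<ge> q x + q y" using qneg[of "x+y"] qneg[of x] qneg[of y] by simp
    then show ?thesis using qs unfolding sublinear_def by (meson antisym)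
  qed
  have qscale: "q (c *\<^sub>R x) = c * q x" for c x
  proof (cases c "0::real" rule: linorder_cases)
    case less
    then have "q ((-c) *\<^sub>R x) = (-c) * q x" using qs unfolding sublinear_def by (meson neg_0_less_iff_less)
    then show ?thesis using qneg[of "(-c) *\<^sub>R x"] by simp
  next
    case equal then show ?thesis using sublinear_0[OF qs] by simp
  next
    case greater then show ?thesis using qs unfolding sublinear_def by auto
  qed
  have "linear q" by (rule linearI) (auto simp: qadd qscale)
  then show ?thesis using qP by blast
qed

lemma norming_functional:
  fixes v :: "'b::real_normed_vector"
  shows "\<exists>L::'b \<Rightarrow>\<^sub>L real. norm L \<le> 1 \<and> blinfun_apply L v = norm v"
proof -
  define G where "G \<psi> t = norm (\<psi> - t *\<^sub>R v) + t * norm v" for \<psi> and t :: real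
  have bdd: "bdd_below (G \<psi> ` UNIV)" for \<psi>
  proof
    fix z assume "z \<in> G \<psi> ` UNIV"
    then obtain t where t: "z = G \<psi> t" by auto
    have "norm (t *\<^sub>R v) \<le> norm (\<psi> - t *\<^sub>R v) + norm \<psi>"
      using norm_triangle_ineq4[of \<psi> "\<psi> - t *\<^sub>R v"] by simp
    moreover have "0 \<le> (\<bar>t\<bar> + t) * norm v" by (intro mult_nonneg_nonneg) auto
    then have "0 \<le> \<bar>t\<bar> * norm v + t * norm v" by (simp add: distrib_right)
    ultimately show "- norm \<psi> \<le> z" unfolding t G_def by simp
  qed
  have "sublinear (\<lambda>\<psi>. Inf (G \<psi> ` UNIV))"
  proof (rule sublinear_Inf)
    show "G (x + y) (s + t) \<le> G x s + G y t" for x y s t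
    proof -
      have "norm (x + y - (s + t) *\<^sub>R v) \<le> norm (x - s *\<^sub>R v) + norm (y - t *\<^sub>R v)"
        using norm_triangle_ineq[of "x - s *\<^sub>R v" "y - t *\<^sub>R v"] by (simp add: algebra_simps)
      then show ?thesis unfolding G_def by (simp add: algebra_simps)
    qed
    show "G (c *\<^sub>R x) (c *\<^sub>R t) = c * G x t" if "c > 0" for c x t
    proof -
      have "norm (c *\<^sub>R x - (c * t) *\<^sub>R v) = c * norm (x - t *\<^sub>R v)"
      proof -
        have "c *\<^sub>R x - (c * t) *\<^sub>R v = c *\<^sub>R (x - t *\<^sub>R v)" by (simp add: algebra_simps)
        then show ?thesis using that by simp
      qed
      then show ?thesis unfolding G_def by (simp add: algebra_simps)
    qed
  qed (use bdd in auto)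
  then obtain L where L: "linear L" "\<And>\<psi>. L \<psi> \<le> Inf (G \<psi> ` UNIV)"
    using hahn_banach_min by blast
  have LG: "L \<psi> \<le> G \<psi> t" for \<psi> t
  proof -
    have "Inf (G \<psi> ` UNIV) \<le> G \<psi> t" by (rule cInf_lower[OF _ bdd]) simp
    then show ?thesis using L(2)[of \<psi>] by linarith
  qed
  have Ln: "L \<psi> \<le> norm \<psi>" for \<psi> using LG[of \<psi> 0] unfolding G_def by simp
  have Labs: "\<bar>L \<psi>\<bar> \<le> norm \<psi>" for \<psi>
    using Ln[of \<psi>] Ln[of "-\<psi>"] linear_neg[OF L(1)] by auto
  have Lv: "L v = norm v"
    using LG[of v 1] LG[of "-v" "-1"] linear_neg[OF L(1), of v] unfolding G_def by simp
  have bl: "bounded_linear L"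
    using L(1) Labs by (intro bounded_linear_intro[where K=1]) (auto simp: linear_add linear_scale)
  have "norm (Blinfun L) \<le> 1"
    by (rule norm_blinfun_bound) (use Labs bounded_linear_Blinfun_apply[OF bl] in auto)
  then show ?thesis using Lv bounded_linear_Blinfun_apply[OF bl] by (intro exI[of _ "Blinfun L"]) simp
qed

lemma reflexive_attain:
  fixes \<phi> :: "'a::real_normed_vector \<Rightarrow>\<^sub>L real"
  assumes "reflexive_space TYPE('a)"
  shows "\<exists>x. norm x \<le> 1 \<and> blinfun_apply \<phi> x = norm \<phi>"
proof -
  obtain \<Phi> :: "('a \<Rightarrow>\<^sub>L real) \<Rightarrow>\<^sub>L real" where \<Phi>: "norm \<Phi> \<le> 1" "blinfun_apply \<Phi> \<phi> = norm \<phi>"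
    using norming_functional by blast
  obtain x where x: "\<And>f. blinfun_apply \<Phi> f = blinfun_apply f x" using assms unfolding reflexive_space_def by blast
  obtain f :: "'a \<Rightarrow>\<^sub>L real" where f: "norm f \<le> 1" "blinfun_apply f x = norm x"
    using norming_functional by blast
  have "norm x = blinfun_apply \<Phi> f" using x f by simp
  also have "\<dots> \<le> norm \<Phi> * norm f" using norm_blinfun[of \<Phi> f] by simp
  also have "\<dots> \<le> 1" using \<Phi>(1) f(1) by (simp add: mult_le_one)
  finally show ?thesis using \<Phi> x by auto
qed

lemma dual_strict:
  fixes a b :: "'a::real_normed_vector \<Rightarrow>\<^sub>L real"
  assumes refl: "reflexive_space TYPE('a)" and sm: "smooth_space TYPE('a)"
    and eq: "norm (a + b) = norm a + norm b"
  shows "norm a *\<^sub>R b = norm b *\<^sub>R a"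
proof (cases "a = 0 \<or> b = 0")
  case True then show ?thesis by auto
next
  case False
  then have na: "norm a > 0" and nb: "norm b > 0" by auto
  obtain x where x: "norm x \<le> 1" "blinfun_apply (a + b) x = norm (a + b)"
    using reflexive_attain[OF refl] by blast
  have "norm a * norm x \<le> norm a" using x(1) na by (simp add: mult_left_le)
  then have ax: "blinfun_apply a x \<le> norm a" using norm_blinfun[of a x] by simp
  have "norm b * norm x \<le> norm b" using x(1) nb by (simp add: mult_left_le)
  then have bx: "blinfun_apply b x \<le> norm b" using norm_blinfun[of b x] by simp
  have "blinfun_apply a x + blinfun_apply b x = norm a + norm b" using x(2) eq by (simp add: plus_blinfun.rep_eq)
  then have ax': "blinfun_apply a x = norm a" and bx': "blinfun_apply b x = norm b" using ax bx by linarith+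
  define u where "u = (1 / norm a) *\<^sub>R a"
  define w where "w = (1 / norm b) *\<^sub>R b"
  have u: "norm u = 1" "blinfun_apply u x = 1" using na ax' unfolding u_def by (auto simp: scaleR_blinfun.rep_eq)
  have w: "norm w = 1" "blinfun_apply w x = 1" using nb bx' unfolding w_def by (auto simp: scaleR_blinfun.rep_eq)
  have "1 \<le> norm x" using norm_blinfun[of u x] u by simp
  then have nx: "norm x = 1" using x(1) by simp
  then have "u = w" using sm u w unfolding smooth_space_def by blast
  then have "(1 / norm a) *\<^sub>R a = (1 / norm b) *\<^sub>R b" unfolding u_def w_def .
  then have "(norm a * norm b) *\<^sub>R ((1 / norm a) *\<^sub>R a) = (norm a * norm b) *\<^sub>R ((1 / norm b) *\<^sub>R b)" by simp
  then show ?thesis using na nb by (simp add: field_simps)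
qed

lemma dual_cone_closed: "closed (dual_cone K)"
proof -
  have "dual_cone K = (\<Inter>x\<in>K. {f. 0 \<le> blinfun_apply f x})" unfolding dual_cone_def by auto
  moreover have "closed {f::'a::real_normed_vector \<Rightarrow>\<^sub>L real. 0 \<le> blinfun_apply f x}" for x
    by (intro closed_Collect_le continuous_intros)
  ultimately show ?thesis by auto
qed

lemma dual_pointed:
  fixes K :: "'a::real_normed_vector set"
  assumes dense: "closure {x - y | x y. x \<in> K \<and> y \<in> K} = UNIV"
    and p: "\<phi> \<in> dual_cone K" "- \<phi> \<in> dual_cone K"
  shows "\<phi> = 0"
proof -
  have z: "blinfun_apply \<phi> k = 0" if "k \<in> K" for k
    using p that unfolding dual_cone_def by (force simp: uminus_blinfun.rep_eq)
  have cl: "closed {x. blinfun_apply \<phi> x = 0}"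
    by (intro closed_Collect_eq continuous_intros)
  have "{x - y | x y. x \<in> K \<and> y \<in> K} \<subseteq> {x. blinfun_apply \<phi> x = 0}"
    using z by (auto simp: blinfun.diff_right)
  then have "closure {x - y | x y. x \<in> K \<and> y \<in> K} \<subseteq> {x. blinfun_apply \<phi> x = 0}"
    using cl by (rule closure_minimal)
  then show ?thesis using dense by (auto intro!: blinfun_eqI)
qed

lemma dual_dominate:
  fixes K :: "'a::real_normed_vector set" and f :: "'a \<Rightarrow>\<^sub>L real"
  assumes cone: "is_cone K" and ne: "K \<noteq> {}" and an: "alpha_normal \<alpha> K" and ap: "\<alpha> > 0"
  shows "\<exists>p. p \<in> dual_cone K \<and> p - f \<in> dual_cone K"
proof -
  define C where "C = \<alpha> * norm f"
  have C0: "C \<ge> 0" unfolding C_def using ap by simp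
  define T where "T = K \<times> K"
  define G where "G x t = C * norm (x + fst t + snd t) - blinfun_apply f (fst t)" for x and t :: "'a \<times> 'a"
  have Kadd: "a + b \<in> K" if "a \<in> K" "b \<in> K" for a b using cone that unfolding is_cone_def by blast
  have Ksc: "c *\<^sub>R a \<in> K" if "a \<in> K" "c \<ge> 0" for a c using cone that unfolding is_cone_def by blast
  obtain k0 where "k0 \<in> K" using ne by blast
  then have K0: "0 \<in> K" using Ksc[of k0 0] by simp
  have bdd: "bdd_below (G x ` T)" for x
  proof
    fix z assume "z \<in> G x ` T"
    then obtain k1 k2 where k: "k1 \<in> K" "k2 \<in> K" "z = G x (k1, k2)" unfolding T_def by auto
    have "norm k1 \<le> \<alpha> * norm (k1 + k2)"
      using an k unfolding alpha_normal_def cle_def by (metis add_diff_cancel_left' diff_zero)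
    then have "blinfun_apply f k1 \<le> C * norm (k1 + k2)"
      using norm_blinfun[of f k1] unfolding C_def
      by (smt (verit, best) mult.assoc mult.left_commute mult_left_mono norm_ge_zero real_norm_def)
    moreover have "norm (k1 + k2) - norm x \<le> norm (x + k1 + k2)"
      using norm_triangle_ineq4[of "x + k1 + k2" x] by (simp add: algebra_simps)
    then have "C * (norm (k1 + k2) - norm x) \<le> C * norm (x + k1 + k2)"
      using C0 by (simp add: mult_left_mono)
    ultimately show "- (C * norm x) \<le> z" unfolding k G_def by (simp add: algebra_simps)
  qed
  have "sublinear (\<lambda>x. Inf (G x ` T))"
  proof (rule sublinear_Inf)
    show "T \<noteq> {}" unfolding T_def using K0 by blast
    show "s + t \<in> T" if "s \<in> T" "t \<in> T" for s t
      using that Kadd unfolding T_def by (auto simp: plus_prod_def)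
    show "c *\<^sub>R t \<in> T" if "c > 0" "t \<in> T" for c t
      using that Ksc unfolding T_def by (auto simp: scaleR_prod_def)
    show "G (x + y) (s + t) \<le> G x s + G y t" for x y s t
    proof -
      have "norm (x + y + fst (s + t) + snd (s + t)) \<le> norm (x + fst s + snd s) + norm (y + fst t + snd t)"
        using norm_triangle_ineq[of "x + fst s + snd s" "y + fst t + snd t"] by (simp add: algebra_simps)
      then have "C * norm (x + y + fst (s + t) + snd (s + t)) \<le> C * norm (x + fst s + snd s) + C * norm (y + fst t + snd t)"
        using C0 by (metis distrib_left mult_left_mono)
      then show ?thesis unfolding G_def by (simp add: blinfun.add_right)
    qed
    show "G (c *\<^sub>R x) (c *\<^sub>R t) = c * G x t" if "c > 0" for c x t
    proof -
      have "c *\<^sub>R x + fst (c *\<^sub>R t) + snd (c *\<^sub>R t) = c *\<^sub>R (x + fst t + snd t)" by (simp add: algebra_simps)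
      then have "norm (c *\<^sub>R x + fst (c *\<^sub>R t) + snd (c *\<^sub>R t)) = c * norm (x + fst t + snd t)"
        using that by simp
      then show ?thesis unfolding G_def by (simp add: blinfun.scaleR_right right_diff_distrib)
    qed
  qed (use bdd in auto)
  then obtain L where L: "linear L" "\<And>x. L x \<le> Inf (G x ` T)"
    using hahn_banach_min by blast
  have LG: "L x \<le> G x t" if "t \<in> T" for x t
  proof -
    have "Inf (G x ` T) \<le> G x t" by (rule cInf_lower[OF _ bdd]) (use that in simp)
    then show ?thesis using L(2)[of x] by linarith
  qed
  have Ln: "L x \<le> C * norm x" for x using LG[of "(0,0)" x] K0 unfolding T_def G_def by simp
  have Labs: "\<bar>L x\<bar> \<le> norm x * C" for x
    using Ln[of x] Ln[of "-x"] linear_neg[OF L(1)] by (auto simp: mult.commute)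
  have bl: "bounded_linear L"
    using L(1) Labs by (intro bounded_linear_intro[where K=C]) (auto simp: linear_add linear_scale)
  define p where "p = Blinfun L"
  have pL: "blinfun_apply p = L" unfolding p_def using bounded_linear_Blinfun_apply[OF bl] .
  have "L k \<ge> blinfun_apply f k" "L k \<ge> 0" if "k \<in> K" for k
  proof -
    have "L (-k) \<le> G (-k) (k, 0)" using LG that K0 unfolding T_def by auto
    then show "L k \<ge> blinfun_apply f k" unfolding G_def using linear_neg[OF L(1), of k] by simp
    have "L (-k) \<le> G (-k) (0, k)" using LG that K0 unfolding T_def by auto
    then show "L k \<ge> 0" unfolding G_def using linear_neg[OF L(1), of k] by simp
  qed
  then have "p \<in> dual_cone K \<and> p - f \<in> dual_cone K"
    unfolding dual_cone_def by (auto simp: pL minus_blinfun.rep_eq)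
  then show ?thesis by blast
qed

lemma scaleR_solve: "(c::real) \<noteq> 0 \<Longrightarrow> c *\<^sub>R e = y \<Longrightarrow> e = (1/c) *\<^sub>R (y::'a::real_vector)"
  by auto

lemma unique_core:
  fixes a1 a2 b1 b2 :: "'b::real_normed_vector"
  assumes Psc: "\<And>c x. c \<ge> 0 \<Longrightarrow> x \<in> P \<Longrightarrow> c *\<^sub>R x \<in> P"
    and Ppt: "\<And>x. x \<in> P \<Longrightarrow> -x \<in> P \<Longrightarrow> x = 0"
    and mem: "a1 \<in> P" "a2 \<in> P" "b1 \<in> P" "b2 \<in> P"
    and d: "a2 - a1 = b2 - b1"
    and pa: "norm a1 *\<^sub>R a2 = norm a2 *\<^sub>R a1" and pb: "norm b1 *\<^sub>R b2 = norm b2 *\<^sub>R b1"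
    and s: "norm a1 + norm b1 = norm a2 + norm b2"
  shows "a1 = a2"
proof -
  define p1 p2 q1 q2 where "p1 = norm a1" "p2 = norm a2" "q1 = norm b1" "q2 = norm b2"
  define \<delta> where "\<delta> = p2 - p1"
  define e where "e = a2 - a1"
  have pa': "p1 *\<^sub>R a2 = p2 *\<^sub>R a1" and pb': "q1 *\<^sub>R b2 = q2 *\<^sub>R b1" using pa pb unfolding p1_p2_q1_q2_def .
  have q: "q1 - q2 = \<delta>" using s unfolding p1_p2_q1_q2_def \<delta>_def by simp
  have e2: "e = b2 - b1" using d unfolding e_def .
  have I1: "p2 *\<^sub>R e = \<delta> *\<^sub>R a2" unfolding e_def \<delta>_def using pa' by (simp add: algebra_simps)
  have I2: "p1 *\<^sub>R e = \<delta> *\<^sub>R a1" unfolding e_def \<delta>_def using pa' by (simp add: algebra_simps)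
  have I3: "q1 *\<^sub>R e = - (\<delta> *\<^sub>R b1)" unfolding e2 q[symmetric] using pb' by (simp add: algebra_simps)
  have I4: "q2 *\<^sub>R e = - (\<delta> *\<^sub>R b2)" unfolding e2 q[symmetric] using pb' by (simp add: algebra_simps)
  have nn: "p1 \<ge> 0" "p2 \<ge> 0" "q1 \<ge> 0" "q2 \<ge> 0" unfolding p1_p2_q1_q2_def by auto
  have "e = 0"
  proof (cases \<delta> "0::real" rule: linorder_cases)
    case greater
    then have "p2 > 0" "q1 > 0" using nn q unfolding \<delta>_def by auto
    then have "e = (\<delta> / p2) *\<^sub>R a2" "-e = (\<delta> / q1) *\<^sub>R b1"
      using scaleR_solve[OF _ I1] scaleR_solve[of q1 "-e" "\<delta> *\<^sub>R b1"] I3 by auto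
    then have "e \<in> P" "-e \<in> P" using Psc mem greater \<open>p2 > 0\<close> \<open>q1 > 0\<close> by auto
    then show ?thesis using Ppt by blast
  next
    case less
    then have "p1 > 0" "q2 > 0" using nn q unfolding \<delta>_def by auto
    then have h1: "-e = (-\<delta> / p1) *\<^sub>R a1" and h2: "e = (-\<delta> / q2) *\<^sub>R b2"
      using scaleR_solve[of p1 "-e" "(-\<delta>) *\<^sub>R a1"] I2 scaleR_solve[of q2 e "(-\<delta>) *\<^sub>R b2"] I4 by auto
    have "-e \<in> P" unfolding h1 by (rule Psc) (use less \<open>p1 > 0\<close> mem in \<open>auto simp: divide_nonpos_pos\<close>)
    moreover have "e \<in> P" unfolding h2 by (rule Psc) (use less \<open>q2 > 0\<close> mem in \<open>auto simp: divide_nonpos_pos\<close>)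
    ultimately have "e \<in> P" "-e \<in> P" by auto
    then show ?thesis using Ppt by blast
  next
    case equal
    show ?thesis
    proof (cases "p1 + q1 > 0")
      case True
      have "(p1 + q1) *\<^sub>R e = 0" unfolding scaleR_add_left I2 I3 equal by simp
      then show ?thesis using True by simp
    next
      case False
      then have "p1 = 0" "q1 = 0" using nn by auto
      then have "p2 = 0" using equal unfolding \<delta>_def by simp
      then show ?thesis using \<open>p1 = 0\<close> unfolding e_def p1_p2_q1_q2_def by simp
    qed
  qed
  then show ?thesis unfolding e_def by simp
qed

lemma closedin_le:
  assumes "continuous_map X euclideanreal u" "continuous_map X euclideanreal v"
  shows "closedin X {F \<in> topspace X. u F \<le> v F}"
  using closedin_continuous_map_preimage[OF continuous_map_diff[OF assms], of "{..0}"] by simp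

lemma closedin_eq:
  assumes "continuous_map X euclideanreal u" "continuous_map X euclideanreal v"
  shows "closedin X {F \<in> topspace X. u F = v F}"
proof -
  have "{F \<in> topspace X. u F = v F} = {F \<in> topspace X. u F \<le> v F} \<inter> {F \<in> topspace X. v F \<le> u F}"
    by auto
  then show ?thesis using closedin_le[OF assms] closedin_le[OF assms(2,1)] by auto
qed

lemma closedin_all:
  assumes "\<And>i. i \<in> I \<Longrightarrow> closedin X {F \<in> topspace X. P i F}"
  shows "closedin X {F \<in> topspace X. \<forall>i\<in>I. P i F}"
proof (cases "I = {}")
  case True then show ?thesis by simp
next
  case False
  have "{F \<in> topspace X. \<forall>i\<in>I. P i F} = \<Inter>((\<lambda>i. {F \<in> topspace X. P i F}) ` I)"
    using False by auto
  then show ?thesis using False assms by (auto intro!: closedin_Inter)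
qed

lemma norm_le_from_ball:
  fixes \<phi> :: "'a::real_normed_vector \<Rightarrow>\<^sub>L real"
  assumes "\<And>x. norm x \<le> 1 \<Longrightarrow> blinfun_apply \<phi> x \<le> b"
  shows "norm \<phi> \<le> b"
proof -
  have b0: "0 \<le> b" using assms[of 0] by simp
  have "\<bar>blinfun_apply \<phi> x\<bar> \<le> b * norm x" for x
  proof (cases "x = 0")
    case True then show ?thesis by simp
  next
    case False
    then have nx: "norm x > 0" by simp
    let ?u = "(1 / norm x) *\<^sub>R x"
    have "norm ?u \<le> 1" "norm (- ?u) \<le> 1" using nx by auto
    then have "blinfun_apply \<phi> ?u \<le> b" "blinfun_apply \<phi> (- ?u) \<le> b" using assms by blast+
    then have "blinfun_apply \<phi> x / norm x \<le> b" "- (blinfun_apply \<phi> x / norm x) \<le> b"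
      by (auto simp: blinfun.scaleR_right blinfun.minus_right)
    then have a1: "blinfun_apply \<phi> x / norm x \<le> b" and a2: "- (blinfun_apply \<phi> x / norm x) \<le> b" by auto
    have "blinfun_apply \<phi> x = (blinfun_apply \<phi> x / norm x) * norm x" using nx by simp
    also have "\<dots> \<le> b * norm x" using a1 nx by (intro mult_right_mono) auto
    finally have "blinfun_apply \<phi> x \<le> b * norm x" .
    moreover have "- blinfun_apply \<phi> x = (- (blinfun_apply \<phi> x / norm x)) * norm x" using nx by simp
    moreover have "\<dots> \<le> b * norm x" using a2 nx by (intro mult_right_mono) auto
    ultimately have "blinfun_apply \<phi> x \<le> b * norm x" "- blinfun_apply \<phi> x \<le> b * norm x" by auto
    then show ?thesis by (auto simp: abs_le_iff)
  qed
  then show ?thesis using b0 by (intro norm_blinfun_bound) auto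
qed

lemma exists_minimizer:
  fixes K :: "'a::real_normed_vector set" and f g :: "'a \<Rightarrow>\<^sub>L real"
  assumes U: "U = upper_bounds (dual_cone K) {f, g}" "U \<noteq> {}"
  shows "\<exists>h\<in>U. \<forall>w\<in>U. sigma f g h \<le> sigma f g w"
proof -
  let ?s = "sigma f g"
  have s0: "0 \<le> ?s h" for h unfolding sigma_def by simp
  have bddU: "bdd_below (?s ` U)" unfolding bdd_below_def using s0 by auto
  define m where "m = Inf (?s ` U)"
  have mle: "m \<le> ?s w" if "w \<in> U" for w unfolding m_def using bddU that by (auto intro: cInf_lower)
  define R where "R = m + 1 + norm f"
  define c where "c n = m + 1 / real (Suc n)" for n
  have c1: "c n \<le> m + 1" for n unfolding c_def by (simp add: divide_le_eq)
  define T where "T = product_topology (\<lambda>x::'a. subtopology euclideanreal {-(R * norm x) .. R * norm x}) UNIV"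
  have topT: "topspace T = {F. \<forall>x. F x \<in> {-(R * norm x) .. R * norm x}}"
    unfolding T_def by (auto simp: PiE_def extensional_def)
  have cT: "compact_space T" unfolding T_def compact_space_product_topology
    by (auto intro!: compact_space_subtopology)
  have proj: "continuous_map T euclideanreal (\<lambda>F. F x)" for x
  proof -
    have "continuous_map T (subtopology euclideanreal {-(R * norm x) .. R * norm x}) (\<lambda>F. F x)"
      unfolding T_def by (rule continuous_map_product_projection) simp
    then show ?thesis by (simp add: continuous_map_in_subtopology)
  qed
  have cconst: "continuous_map T euclideanreal (\<lambda>F. a)" for a :: real by simp
  define D where "D n = {F \<in> topspace T.
      (\<forall>xy \<in> UNIV \<times> UNIV. F (fst xy + snd xy) = F (fst xy) + F (snd xy)) \<and>
      (\<forall>rx \<in> UNIV \<times> UNIV. F (snd rx *\<^sub>R fst rx) = snd rx * F (fst rx)) \<and>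
      (\<forall>k\<in>K. blinfun_apply f k \<le> F k) \<and>
      (\<forall>k\<in>K. blinfun_apply g k \<le> F k) \<and>
      (\<forall>xy \<in> {x. norm x \<le> 1} \<times> {x. norm x \<le> 1}.
          F (fst xy) - blinfun_apply f (fst xy) + (F (snd xy) - blinfun_apply g (snd xy)) \<le> c n)}" for n
  have Dcl: "closedin T (D n)" for n
  proof -
    have e1: "closedin T {F \<in> topspace T. \<forall>xy \<in> UNIV \<times> UNIV. F (fst xy + snd xy) = F (fst xy) + F (snd xy)}"
      by (intro closedin_all closedin_eq continuous_map_add proj)
    have e2: "closedin T {F \<in> topspace T. \<forall>rx \<in> UNIV \<times> UNIV. F (snd rx *\<^sub>R fst rx) = snd rx * F (fst rx)}"
      by (intro closedin_all closedin_eq continuous_map_real_mult_left proj)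
    have e3: "closedin T {F \<in> topspace T. \<forall>k\<in>K. blinfun_apply f k \<le> F k}"
      by (intro closedin_all closedin_le cconst proj)
    have e4: "closedin T {F \<in> topspace T. \<forall>k\<in>K. blinfun_apply g k \<le> F k}"
      by (intro closedin_all closedin_le cconst proj)
    have e5: "closedin T {F \<in> topspace T. \<forall>xy \<in> {x. norm x \<le> 1} \<times> {x. norm x \<le> 1}.
          F (fst xy) - blinfun_apply f (fst xy) + (F (snd xy) - blinfun_apply g (snd xy)) \<le> c n}"
      by (intro closedin_all closedin_le cconst proj continuous_map_add continuous_map_diff)
    have "D n = {F \<in> topspace T. \<forall>xy \<in> UNIV \<times> UNIV. F (fst xy + snd xy) = F (fst xy) + F (snd xy)}
      \<inter> {F \<in> topspace T. \<forall>rx \<in> UNIV \<times> UNIV. F (snd rx *\<^sub>R fst rx) = snd rx * F (fst rx)}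
      \<inter> {F \<in> topspace T. \<forall>k\<in>K. blinfun_apply f k \<le> F k}
      \<inter> {F \<in> topspace T. \<forall>k\<in>K. blinfun_apply g k \<le> F k}
      \<inter> {F \<in> topspace T. \<forall>xy \<in> {x. norm x \<le> 1} \<times> {x. norm x \<le> 1}.
          F (fst xy) - blinfun_apply f (fst xy) + (F (snd xy) - blinfun_apply g (snd xy)) \<le> c n}"
      unfolding D_def by blast
    then show ?thesis using e1 e2 e3 e4 e5 by (simp add: closedin_Int)
  qed
  have Udef: "h \<in> U \<longleftrightarrow> (\<forall>k\<in>K. blinfun_apply f k \<le> blinfun_apply h k \<and> blinfun_apply g k \<le> blinfun_apply h k)" for h
    unfolding U upper_bounds_def cle_def dual_cone_def by (auto simp: minus_blinfun.rep_eq)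
  have inD: "blinfun_apply h \<in> D n" if h: "h \<in> U" "?s h \<le> c n" for h n
  proof -
    have nh: "norm h \<le> R"
    proof -
      have "norm h \<le> norm (h - f) + norm f" using norm_triangle_ineq2[of h f] by simp
      also have "norm (h - f) \<le> ?s h" unfolding sigma_def by simp
      finally show ?thesis using h(2) c1[of n] unfolding R_def by simp
    qed
    have "blinfun_apply h \<in> topspace T" unfolding topT
    proof (clarify)
      fix x
      have "\<bar>blinfun_apply h x\<bar> \<le> norm h * norm x" using norm_blinfun[of h x] by simp
      also have "\<dots> \<le> R * norm x" using nh by (simp add: mult_right_mono)
      finally show "blinfun_apply h x \<in> {-(R * norm x) .. R * norm x}" by (auto simp: abs_le_iff)
    qed
    moreover have "blinfun_apply h (fst xy) - blinfun_apply f (fst xy) + (blinfun_apply h (snd xy) - blinfun_apply g (snd xy)) \<le> c n"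
      if "norm (fst xy) \<le> 1" "norm (snd xy) \<le> 1" for xy
    proof -
      have "blinfun_apply (h - f) (fst xy) \<le> norm (h - f)"
        using norm_blinfun[of "h - f" "fst xy"] that(1)
        by (smt (verit) mult_left_le norm_ge_zero real_norm_def)
      moreover have "blinfun_apply (h - g) (snd xy) \<le> norm (h - g)"
        using norm_blinfun[of "h - g" "snd xy"] that(2)
        by (smt (verit) mult_left_le norm_ge_zero real_norm_def)
      ultimately show ?thesis using h(2) unfolding sigma_def by (simp add: minus_blinfun.rep_eq)
    qed
    ultimately show ?thesis unfolding D_def using h(1) Udef
      by (auto simp: blinfun.add_right blinfun.scaleR_right)
  qed
  have fromD: "\<exists>h. h \<in> U \<and> ?s h \<le> c n \<and> blinfun_apply h = F" if F: "F \<in> D n" for F n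
  proof -
    have Fadd: "F (x + y) = F x + F y" and Fsc: "F (r *\<^sub>R x) = r * F x" for x y r
      using F unfolding D_def by auto
    have Fb: "\<bar>F x\<bar> \<le> norm x * R" for x
    proof -
      have "-(R*norm x) \<le> F x \<and> F x \<le> R*norm x" using F unfolding D_def topT by auto
      then show ?thesis by (auto simp: abs_le_iff mult.commute)
    qed
    have bl: "bounded_linear F" by (intro bounded_linear_intro[where K=R]) (auto simp: Fadd Fsc Fb)
    define h where "h = Blinfun F"
    have hF: "blinfun_apply h = F" unfolding h_def using bounded_linear_Blinfun_apply[OF bl] .
    have hU: "h \<in> U" unfolding Udef hF using F unfolding D_def by auto
    have cond: "blinfun_apply (h - f) x + blinfun_apply (h - g) y \<le> c n" if "norm x \<le> 1" "norm y \<le> 1" for x y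
      using F that unfolding D_def by (auto simp: hF minus_blinfun.rep_eq)
    have "norm (h - f) \<le> c n - blinfun_apply (h - g) y" if "norm y \<le> 1" for y
      by (rule norm_le_from_ball) (use cond that in force)
    then have "blinfun_apply (h - g) y \<le> c n - norm (h - f)" if "norm y \<le> 1" for y
      using that by force
    then have "norm (h - g) \<le> c n - norm (h - f)" by (rule norm_le_from_ball)
    then have "?s h \<le> c n" unfolding sigma_def by simp
    then show ?thesis using hU hF by blast
  qed
  have Dne: "D n \<noteq> {}" for n
  proof -
    have "m < c n" unfolding c_def by simp
    then obtain h where "h \<in> U" "?s h < c n"
      using cInf_lessD[of "?s ` U" "c n"] U(2) unfolding m_def by auto
    then show ?thesis using inD[of h n] by auto
  qed
  have Ddec: "decseq D"
  proof (rule decseq_SucI)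
    fix n show "D (Suc n) \<subseteq> D n"
    proof -
      have cdec: "c (Suc n) \<le> c n" unfolding c_def by (simp add: frac_le)
      show ?thesis unfolding D_def
      proof (intro subsetI, elim CollectE conjE, intro CollectI conjI)
        fix F assume a: "\<forall>xy\<in>{x. norm x \<le> 1} \<times> {x. norm x \<le> 1}.
          F (fst xy) - blinfun_apply f (fst xy) + (F (snd xy) - blinfun_apply g (snd xy)) \<le> c (Suc n)"
        show "\<forall>xy\<in>{x. norm x \<le> 1} \<times> {x. norm x \<le> 1}.
          F (fst xy) - blinfun_apply f (fst xy) + (F (snd xy) - blinfun_apply g (snd xy)) \<le> c n"
          using a cdec by (meson order_trans)
      qed
    qed
  qed
  obtain F where F: "F \<in> (\<Inter>n. D n)"
    using compact_space_imp_nest[OF cT Dcl Dne Ddec] by blast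
  obtain h where h: "h \<in> U" "blinfun_apply h = F" using fromD[of F 0] F by blast
  have "?s h \<le> c n" for n
  proof -
    obtain h' where "h' \<in> U" "?s h' \<le> c n" "blinfun_apply h' = F" using fromD[of F n] F by blast
    then have "h' = h" using h(2) blinfun_apply_inject by metis
    then show ?thesis using \<open>?s h' \<le> c n\<close> by simp
  qed
  then have "?s h \<le> m"
  proof -
    have "?s h - m \<le> 1 / real (Suc n)" for n using \<open>\<And>n. ?s h \<le> c n\<close>[of n] unfolding c_def by simp
    then show ?thesis
      by (metis (no_types) diff_le_0_iff_le nat_approx_posE not_less of_nat_Suc order_trans less_imp_le)
  qed
  then show ?thesis using h mle by (meson order_trans)
qed

lemma dual_mono_norm:
  fixes K :: "'a::real_normed_vector set"
  assumes ac: "approx_1_conormal K" and p: "\<phi> \<in> dual_cone K" "\<psi> - \<phi> \<in> dual_cone K"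
  shows "norm \<phi> \<le> norm \<psi>"
proof (rule norm_le_from_ball)
  fix x :: 'a assume x: "norm x \<le> 1"
  show "blinfun_apply \<phi> x \<le> norm \<psi>"
  proof (rule field_le_epsilon)
    fix e :: real assume e: "e > 0"
    define \<epsilon> where "\<epsilon> = e / (norm \<psi> + 1)"
    have \<epsilon>0: "\<epsilon> > 0" unfolding \<epsilon>_def using e norm_ge_zero[of \<psi>] by (intro divide_pos_pos) linarith+
    obtain a where a: "a - 0 \<in> K" "a - x \<in> K" "norm a < norm x + \<epsilon>"
      using ac \<epsilon>0 unfolding approx_1_conormal_def cle_def by blast
    have "blinfun_apply \<phi> x \<le> blinfun_apply \<phi> a"
      using p(1) a(2) unfolding dual_cone_def by (auto simp: blinfun.diff_right)
    also have "\<dots> \<le> blinfun_apply \<psi> a"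
      using p(2) a(1) unfolding dual_cone_def by (auto simp: minus_blinfun.rep_eq)
    also have "\<dots> \<le> norm \<psi> * norm a" using norm_blinfun[of \<psi> a] by simp
    also have "\<dots> \<le> norm \<psi> * (1 + \<epsilon>)" using a(3) x by (intro mult_left_mono) auto
    also have "\<dots> = norm \<psi> + norm \<psi> * \<epsilon>" by (simp add: algebra_simps)
    also have "norm \<psi> * \<epsilon> \<le> e"
    proof -
      have eq: "norm \<psi> * \<epsilon> = e * (norm \<psi> / (norm \<psi> + 1))" unfolding \<epsilon>_def by simp
      have pos: "0 < norm \<psi> + 1" using norm_ge_zero[of \<psi>] by linarith
      have "norm \<psi> / (norm \<psi> + 1) \<le> 1" by (simp add: pos_divide_le_eq[OF pos])
      then have "e * (norm \<psi> / (norm \<psi> + 1)) \<le> e * 1" using e by (intro mult_left_mono) auto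
      then show ?thesis using eq by simp
    qed
    finally show "blinfun_apply \<phi> x \<le> norm \<psi> + e" by simp
  qed
qed

theorem theorem6p6:
  fixes \<alpha> :: real and K :: "'a::banach set"
  assumes "\<alpha> > 0"
    and "is_cone K" and "closed K"
    and "alpha_normal \<alpha> K"
    and "smooth_space TYPE('a)"
    and "reflexive_space TYPE('a)"
    and "closure {x - y | x y. x \<in> K \<and> y \<in> K} = UNIV"
  shows "upsilon_quasi_lattice (dual_cone K) \<and>
         (approx_1_conormal K \<longrightarrow>
           mu_quasi_lattice (dual_cone K) \<and>
           upsilon_quasi_sup (dual_cone K) = mu_quasi_sup (dual_cone K))"
proof -
  let ?K = "dual_cone K"
  have Kne: "K \<noteq> {}" using assms(7) by auto
  have Kadd: "a + b \<in> ?K" if "a \<in> ?K" "b \<in> ?K" for a b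
    using that unfolding dual_cone_def by (auto simp: plus_blinfun.rep_eq)
  have Ksc: "c *\<^sub>R a \<in> ?K" if "c \<ge> 0" "a \<in> ?K" for c a
    using that unfolding dual_cone_def by (auto simp: scaleR_blinfun.rep_eq)
  have Kpt: "a = 0" if "a \<in> ?K" "-a \<in> ?K" for a
    using dual_pointed[OF assms(7) that] .
  define U where "U f g = upper_bounds ?K {f, g}" for f g
  have Umem: "h \<in> U f g \<longleftrightarrow> h - f \<in> ?K \<and> h - g \<in> ?K" for h f g
    unfolding U_def upper_bounds_def cle_def by auto
  have Une: "U f g \<noteq> {}" for f g
  proof -
    obtain p where p: "p \<in> ?K" "p - f \<in> ?K" using dual_dominate[OF assms(2) Kne assms(4) assms(1)] by blast
    obtain q where q: "q \<in> ?K" "q - g \<in> ?K" using dual_dominate[OF assms(2) Kne assms(4) assms(1)] by blast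
    have "(p - f) + q \<in> ?K" "(q - g) + p \<in> ?K" using Kadd p q by auto
    then have "p + q \<in> U f g" unfolding Umem by (simp add: algebra_simps)
    then show ?thesis by blast
  qed
  have ex: "\<exists>h\<in>U f g. \<forall>w\<in>U f g. sigma f g h \<le> sigma f g w" for f g
    using exists_minimizer[OF U_def Une] .
  have uniq: "h1 = h2" if h1: "h1 \<in> U f g" "\<forall>w\<in>U f g. sigma f g h1 \<le> sigma f g w"
    and h2: "h2 \<in> U f g" "\<forall>w\<in>U f g. sigma f g h2 \<le> sigma f g w" for h1 h2 f g
  proof -
    define a1 a2 b1 b2 where "a1 = h1 - f" "a2 = h2 - f" "b1 = h1 - g" "b2 = h2 - g"
    have mem: "a1 \<in> ?K" "a2 \<in> ?K" "b1 \<in> ?K" "b2 \<in> ?K" using h1 h2 Umem unfolding a1_a2_b1_b2_def by auto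
    define mid where "mid = (1/2::real) *\<^sub>R (h1 + h2)"
    have "mid - f = (1/2::real) *\<^sub>R (a1 + a2)" "mid - g = (1/2::real) *\<^sub>R (b1 + b2)"
    proof -
      have half: "(1/2::real) *\<^sub>R x + (1/2::real) *\<^sub>R x = x" for x :: "'a \<Rightarrow>\<^sub>L real"
        by (simp add: scaleR_add_left[symmetric])
      show "mid - f = (1/2::real) *\<^sub>R (a1 + a2)" "mid - g = (1/2::real) *\<^sub>R (b1 + b2)"
        unfolding mid_def a1_a2_b1_b2_def by (simp_all add: algebra_simps half)
    qed
    moreover have "(1/2::real) *\<^sub>R (a1 + a2) \<in> ?K" "(1/2::real) *\<^sub>R (b1 + b2) \<in> ?K"
      using Ksc Kadd mem by auto
    ultimately have midU: "mid \<in> U f g" unfolding Umem by simp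
    have s1: "sigma f g h1 = norm a1 + norm b1" "sigma f g h2 = norm a2 + norm b2"
      unfolding sigma_def a1_a2_b1_b2_def by auto
    have smid: "sigma f g mid = (1/2) * norm (a1 + a2) + (1/2) * norm (b1 + b2)"
      unfolding sigma_def \<open>mid - f = _\<close> \<open>mid - g = _\<close> by simp
    have e12: "sigma f g h1 = sigma f g h2" using h1 h2 by (meson antisym)
    have "sigma f g h1 \<le> sigma f g mid" using h1(2) midU by blast
    moreover have "norm (a1 + a2) \<le> norm a1 + norm a2" "norm (b1 + b2) \<le> norm b1 + norm b2"
      by (rule norm_triangle_ineq)+
    ultimately have ea: "norm (a1 + a2) = norm a1 + norm a2" and eb: "norm (b1 + b2) = norm b1 + norm b2"
      using s1 e12 smid by linarith+
    have "a1 = a2"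
    proof (rule unique_core[of ?K])
      show "c *\<^sub>R x \<in> ?K" if "c \<ge> 0" "x \<in> ?K" for c x using Ksc that .
      show "x = 0" if "x \<in> ?K" "-x \<in> ?K" for x using Kpt that .
      show "a2 - a1 = b2 - b1" unfolding a1_a2_b1_b2_def by simp
      show "norm a1 *\<^sub>R a2 = norm a2 *\<^sub>R a1" using dual_strict[OF assms(6) assms(5) ea] .
      show "norm b1 *\<^sub>R b2 = norm b2 *\<^sub>R b1" using dual_strict[OF assms(6) assms(5) eb] .
      show "norm a1 + norm b1 = norm a2 + norm b2" using s1 e12 by simp
    qed (use mem in auto)
    then show ?thesis unfolding a1_a2_b1_b2_def by simp
  qed
  have ups: "upsilon_quasi_lattice ?K"
    unfolding upsilon_quasi_lattice_def quasi_lattice_wrt_def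
  proof (intro conjI allI)
    show "closed ?K" by (rule dual_cone_closed)
    fix f g
    show "upper_bounds ?K {f, g} \<noteq> {}" using Une unfolding U_def .
    show "\<exists>!z. z \<in> upper_bounds ?K {f, g} \<and> (\<forall>w\<in>upper_bounds ?K {f, g}. sigma f g z \<le> sigma f g w)"
      using ex[of f g] uniq[of _ f g] unfolding U_def by blast
  qed
  have mu: "mu_quasi_lattice ?K \<and> upsilon_quasi_sup ?K = mu_quasi_sup ?K" if ac: "approx_1_conormal K"
  proof -
    have key: "\<exists>h. h \<in> min_upper_bounds ?K {f, g} \<and> (\<forall>w\<in>U f g. sigma f g h \<le> sigma f g w)" for f g
    proof -
      obtain h where h: "h \<in> U f g" "\<forall>w\<in>U f g. sigma f g h \<le> sigma f g w" using ex by blast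
      have "w = h" if w: "\<forall>a\<in>{f, g}. cle ?K a w" "cle ?K w h" for w
      proof -
        have wU: "w \<in> U f g" using w(1) unfolding U_def upper_bounds_def by auto
        then have wf: "w - f \<in> ?K" "w - g \<in> ?K" using Umem by auto
        have hw: "h - w \<in> ?K" using w(2) unfolding cle_def .
        have "norm (w - f) \<le> norm (h - f)"
          by (rule dual_mono_norm[OF ac wf(1)]) (use hw in \<open>simp add: algebra_simps\<close>)
        moreover have "norm (w - g) \<le> norm (h - g)"
          by (rule dual_mono_norm[OF ac wf(2)]) (use hw in \<open>simp add: algebra_simps\<close>)
        ultimately have "sigma f g w \<le> sigma f g h" unfolding sigma_def by simp
        then have "\<forall>w'\<in>U f g. sigma f g w \<le> sigma f g w'" using h(2) by (meson order_trans)
        then show ?thesis using uniq[OF wU _ h] by blast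
      qed
      then have "h \<in> min_upper_bounds ?K {f, g}"
        using h(1) unfolding min_upper_bounds_def U_def by blast
      then show ?thesis using h by blast
    qed
    have MU: "min_upper_bounds ?K {f, g} \<subseteq> U f g" for f g
      unfolding min_upper_bounds_def U_def by auto
    have Mmin: "\<exists>!z. z \<in> min_upper_bounds ?K {f, g} \<and> (\<forall>w\<in>min_upper_bounds ?K {f, g}. sigma f g z \<le> sigma f g w)"
      and Mne: "min_upper_bounds ?K {f, g} \<noteq> {}"
      and same: "\<And>z. z \<in> min_upper_bounds ?K {f, g} \<and> (\<forall>w\<in>min_upper_bounds ?K {f, g}. sigma f g z \<le> sigma f g w)
         \<longleftrightarrow> z \<in> upper_bounds ?K {f, g} \<and> (\<forall>w\<in>upper_bounds ?K {f, g}. sigma f g z \<le> sigma f g w)" for f g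
    proof -
      obtain h where h: "h \<in> min_upper_bounds ?K {f, g}" "\<forall>w\<in>U f g. sigma f g h \<le> sigma f g w" using key by blast
      have hU: "h \<in> U f g" using h(1) MU by blast
      show "min_upper_bounds ?K {f, g} \<noteq> {}" using h by blast
      show sm: "z \<in> min_upper_bounds ?K {f, g} \<and> (\<forall>w\<in>min_upper_bounds ?K {f, g}. sigma f g z \<le> sigma f g w)
         \<longleftrightarrow> z \<in> upper_bounds ?K {f, g} \<and> (\<forall>w\<in>upper_bounds ?K {f, g}. sigma f g z \<le> sigma f g w)" for z
      proof
        assume z: "z \<in> min_upper_bounds ?K {f, g} \<and> (\<forall>w\<in>min_upper_bounds ?K {f, g}. sigma f g z \<le> sigma f g w)"
        then have "sigma f g z \<le> sigma f g h" using h(1) by blast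
        then have "\<forall>w\<in>U f g. sigma f g z \<le> sigma f g w" using h(2) by (meson order_trans)
        moreover have "z \<in> U f g" using z MU by blast
        ultimately have "z = h" using uniq[OF _ _ hU h(2)] by blast
        then show "z \<in> upper_bounds ?K {f, g} \<and> (\<forall>w\<in>upper_bounds ?K {f, g}. sigma f g z \<le> sigma f g w)"
          using hU h(2) unfolding U_def by blast
      next
        assume z: "z \<in> upper_bounds ?K {f, g} \<and> (\<forall>w\<in>upper_bounds ?K {f, g}. sigma f g z \<le> sigma f g w)"
        then have "z = h" using uniq[OF _ _ hU h(2)] unfolding U_def by blast
        then show "z \<in> min_upper_bounds ?K {f, g} \<and> (\<forall>w\<in>min_upper_bounds ?K {f, g}. sigma f g z \<le> sigma f g w)"
          using h MU by blast
      qed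
      show "\<exists>!z. z \<in> min_upper_bounds ?K {f, g} \<and> (\<forall>w\<in>min_upper_bounds ?K {f, g}. sigma f g z \<le> sigma f g w)"
        unfolding sm using ups unfolding upsilon_quasi_lattice_def quasi_lattice_wrt_def by blast
    qed
    have "mu_quasi_lattice ?K"
      unfolding mu_quasi_lattice_def quasi_lattice_wrt_def using dual_cone_closed Mmin Mne by blast
    moreover have "upsilon_quasi_sup ?K = mu_quasi_sup ?K"
      unfolding upsilon_quasi_sup_def mu_quasi_sup_def quasi_sup_wrt_def
      by (intro ext) (simp only: same)
    ultimately show ?thesis by blast
  qed
  show ?thesis using ups mu by blast
qed

end
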